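(* Let $p$ be an odd prime, let $n=s=m=2$, and let $a,b,c,d,e,f\in\mathbb{Z}_p\setminus\{0\}$ be such that each of the pairs $(a,b)$, $(c,d)$, $(e,f)$ satisfies the quadratic reciprocity law. Put $k_s=k(a,b)$, $k_n=k(c,d)$, $k_m=k(e,f)$. Then $T_{RN}$ is invertible over $\mathbb{Z}_p$ if and only if, for some labelling $\{k_1,k_2,k_3\}=\{k_n,k_s,k_m\}$ (as a multiset), one of the following holds: (i) $k_1\equiv k_2\equiv k_3\pmod p$ and $p\ne3$; (ii) $k_1\equiv k_2\not\equiv k_3\pmod p$ and $k_3\not\equiv\pm2k_1\pmod p$; (iii) $k_1,k_2,k_3$ are pairwise distinct modulo $p$ and $k_3\not\equiv\pm(k_1+k_2)$ and $k_3\not\equiv\pm(k_1-k_2)\pmod p$.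
   Context: $\mathbb{Z}_p=\{0,1,\dots,p-1\}$ is the field with $p$ elements. For $k\ge1$ and $t_1,t_2\in\mathbb{Z}_p$, $S_k(t_1,t_2)$ is the $k\times k$ tridiagonal matrix with zeros on the main diagonal, every subdiagonal entry (positions $(i+1,i)$) equal to $t_1$, and every superdiagonal entry (positions $(i,i+1)$) equal to $t_2$. $I_r$ is the $r\times r$ identity and $\otimes$ the Kronecker product. $M_s=I_s\otimes S_n(c,d)+S_s(a,b)\otimes I_n$ and $T_{RN}=I_m\otimes M_s+S_m(f,e)\otimes I_{ns}$, with entries in $\mathbb{Z}_p$. A pair $(t_1,t_2)\in\mathbb{Z}_p\times\mathbb{Z}_p$ satisfies the quadratic reciprocity law if either $t_1=t_2$, or $t_1t_2\equiv t^2\pmod p$ for some $t\in\mathbb{Z}_p$ (for nonzero $t_1,t_2$: both are quadratic residues or both are non-residues). For such a pair, $k(t_1,t_2)=t_1$ if $t_1=t_2$, and otherwise $k(t_1,t_2)=\min\{t\in\{0,\dots,p-1\}: t^2\equiv t_1t_2\pmod p\}$. *)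

theory Defs
  imports "Jordan_Normal_Form.Matrix" "Berlekamp_Zassenhaus.Finite_Field" "HOL-Library.Multiset"
begin

definition tridiag :: "nat \<Rightarrow> 'a::zero \<Rightarrow> 'a \<Rightarrow> 'a mat" where
  "tridiag k t1 t2 = mat k k (\<lambda>(i,j). if i = j + 1 then t1 else if j = i + 1 then t2 else 0)"

definition kron :: "'a::times mat \<Rightarrow> 'a mat \<Rightarrow> 'a mat" where
  "kron A B = mat (dim_row A * dim_row B) (dim_col A * dim_col B)
     (\<lambda>(i,j). A $$ (i div dim_row B, j div dim_col B) * B $$ (i mod dim_row B, j mod dim_col B))"

definition M_s :: "nat \<Rightarrow> nat \<Rightarrow> 'a::comm_ring_1 \<Rightarrow> 'a \<Rightarrow> 'a \<Rightarrow> 'a \<Rightarrow> 'a mat" where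
  "M_s n s a b c d = kron (1\<^sub>m s) (tridiag n c d) + kron (tridiag s a b) (1\<^sub>m n)"

definition T_RN :: "nat \<Rightarrow> nat \<Rightarrow> nat \<Rightarrow> 'a::comm_ring_1 \<Rightarrow> 'a \<Rightarrow> 'a \<Rightarrow> 'a \<Rightarrow> 'a \<Rightarrow> 'a \<Rightarrow> 'a mat" where
  "T_RN n s m a b c d e f = kron (1\<^sub>m m) (M_s n s a b c d) + kron (tridiag m f e) (1\<^sub>m (n * s))"

definition qrl :: "'p::prime_card mod_ring \<Rightarrow> 'p mod_ring \<Rightarrow> bool" where
  "qrl t1 t2 \<longleftrightarrow> t1 = t2 \<or> (\<exists>t. t1 * t2 = t ^ 2)"

definition kval :: "'p::prime_card mod_ring \<Rightarrow> 'p mod_ring \<Rightarrow> nat" where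
  "kval t1 t2 = (if t1 = t2 then nat (to_int_mod_ring t1)
     else (LEAST t::nat. t < CARD('p) \<and> (of_nat t :: 'p mod_ring) ^ 2 = t1 * t2))"

end

theory Submission
  imports Defs "Jordan_Normal_Form.Determinant"
begin


definition Tm :: "'a::comm_ring_1 \<Rightarrow> 'a \<Rightarrow> 'a \<Rightarrow> 'a \<Rightarrow> 'a \<Rightarrow> 'a \<Rightarrow> 'a mat" where
 "Tm a b c d e f = mat_of_rows_list 8 [[0, (d), (b), 0, (e), 0, 0, 0], [(c), 0, 0, (b), 0, (e), 0, 0], [(a), 0, 0, (d), 0, 0, (e), 0], [0, (a), (c), 0, 0, 0, 0, (e)], [(f), 0, 0, 0, 0, (d), (b), 0], [0, (f), 0, 0, (c), 0, 0, (b)], [0, 0, (f), 0, (a), 0, 0, (d)], [0, 0, 0, (f), 0, (a), (c), 0]]"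
definition Mm :: "'a::comm_ring_1 \<Rightarrow> 'a \<Rightarrow> 'a \<Rightarrow> 'a \<Rightarrow> 'a \<Rightarrow> 'a \<Rightarrow> 'a mat" where
 "Mm a b c d e f = mat_of_rows_list 8 [[0, (d * e * f + - (c * d * d) + a * b * d), (b * e * f + b * c * d + - (a * b * b)), 0, (- (e * e * f) + c * d * e + a * b * e), 0, 0, (- (2 * b * d * e))], [(c * e * f + - (c * c * d) + a * b * c), 0, 0, (b * e * f + b * c * d + - (a * b * b)), 0, (- (e * e * f) + c * d * e + a * b * e), (- (2 * b * c * e)), 0], [(a * e * f + a * c * d + - (a * a * b)), 0, 0, (d * e * f + - (c * d * d) + a * b * d), 0, (- (2 * a * d * e)), (- (e * e * f) + c * d * e + a * b * e), 0], [0, (a * e * f + a * c * d + - (a * a * b)), (c * e * f + - (c * c * d) + a * b * c), 0, (- (2 * a * c * e)), 0, 0, (- (e * e * f) + c * d * e + a * b * e)], [(- (e * f * f) + c * d * f + a * b * f), 0, 0, (- (2 * b * d * f)), 0, (d * e * f + - (c * d * d) + a * b * d), (b * e * f + b * c * d + - (a * b * b)), 0], [0, (- (e * f * f) + c * d * f + a * b * f), (- (2 * b * c * f)), 0, (c * e * f + - (c * c * d) + a * b * c), 0, 0, (b * e * f + b * c * d + - (a * b * b))], [0, (- (2 * a * d * f)), (- (e * f * f) + c * d * f + a * b * f), 0, (a * e * f + a * c * d + - (a * a * b)), 0, 0, (d * e * f + - (c * d * d) + a * b * d)], [(- (2 * a * c * f)), 0, 0, (- (e * f * f) + c * d * f +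 a * b * f), 0, (a * e * f + a * c * d + - (a * a * b)), (c * e * f + - (c * c * d) + a * b * c), 0]]"
definition Qp :: "'a::comm_ring_1 \<Rightarrow> 'a \<Rightarrow> 'a \<Rightarrow> 'a \<Rightarrow> 'a \<Rightarrow> 'a \<Rightarrow> 'a" where
 "Qp a b c d e f = (c*d)^2 + (a*b)^2 + (e*f)^2 - 2*(c*d)*(a*b) - 2*(a*b)*(e*f) - 2*(c*d)*(e*f)"

lemma less8: "(i::nat) < 8 \<longleftrightarrow> i = 0 \<or> i = 1 \<or> i = 2 \<or> i = 3 \<or> i = 4 \<or> i = 5 \<or> i = 6 \<or> i = 7" by auto

lemma T_ent: "i < 8 \<Longrightarrow> j < 8 \<Longrightarrow> T_RN 2 2 2 a b c d e f $$ (i,j) = Tm a b c d e f $$ (i,j)"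
  unfolding less8
  by (elim disjE; simp add: T_RN_def M_s_def kron_def tridiag_def Tm_def mat_of_rows_list_def)

lemma dimT: "dim_row (Tm a b c d e f) = 8" "dim_col (Tm a b c d e f) = 8"
  "dim_row (Mm a b c d e f) = 8" "dim_col (Mm a b c d e f) = 8"
  by (simp_all add: Tm_def Mm_def mat_of_rows_list_def)

lemma T_eq: "T_RN 2 2 2 a b c d e f = Tm a b c d e f"
proof (rule eq_matI)
  show "dim_row (T_RN 2 2 2 a b c d e f) = dim_row (Tm a b c d e f)"
    "dim_col (T_RN 2 2 2 a b c d e f) = dim_col (Tm a b c d e f)"
    by (simp_all add: dimT T_RN_def M_s_def kron_def tridiag_def)
qed (simp add: dimT T_ent)

lemma sum8: "(\<Sum>i\<in>{0..<8::nat}. g i) = g 0 + g 1 + g 2 + g 3 + g 4 + g 5 + g 6 + g 7"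
  by (simp add: numeral_eq_Suc atLeast0LessThan lessThan_Suc ac_simps)

lemma TM_ent: "i < 8 \<Longrightarrow> j < 8 \<Longrightarrow> (Tm a b c d e f * Mm a b c d e f) $$ (i,j) = (if i = j then - Qp a b c d e f else 0)"
  unfolding less8
  by (elim disjE; simp add: dimT index_mult_mat scalar_prod_def sum8 Tm_def Mm_def mat_of_rows_list_def Qp_def;
      simp add: algebra_simps power2_eq_square)



lemma carT: "Tm a b c d e f \<in> carrier_mat 8 8" "Mm a b c d e f \<in> carrier_mat 8 8"
  by (rule carrier_matI, simp_all only: dimT)+

lemma M07: "Mm a b c d e f $$ (0,7) = - (2 * b * d * e)"
  unfolding Mm_def mat_of_rows_list_def by (subst index_mat) auto

lemma TM: "Tm a b c d e f * Mm a b c d e f = (- Qp a b c d e f) \<cdot>\<^sub>m 1\<^sub>m 8"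
proof (rule eq_matI)
  fix i j assume "i < dim_row ((- Qp a b c d e f) \<cdot>\<^sub>m 1\<^sub>m 8)" "j < dim_col ((- Qp a b c d e f) \<cdot>\<^sub>m (1\<^sub>m 8 :: 'a mat))"
  hence ij: "i < 8" "j < 8" by simp_all
  show "(Tm a b c d e f * Mm a b c d e f) $$ (i, j) = ((- Qp a b c d e f) \<cdot>\<^sub>m 1\<^sub>m 8) $$ (i, j)"
    by (simp only: TM_ent[OF ij]) (simp add: ij)
qed (simp_all add: dimT)


lemma inv_iff:
  fixes a b c d e f :: "'a::field"
  assumes two: "(2::'a) \<noteq> 0" and nz: "b \<noteq> 0" "d \<noteq> 0" "e \<noteq> 0"
  shows "invertible_mat (Tm a b c d e f) \<longleftrightarrow> Qp a b c d e f \<noteq> 0"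
proof
  assume inv: "invertible_mat (Tm a b c d e f)"
  show "Qp a b c d e f \<noteq> 0"
  proof
    assume Q0: "Qp a b c d e f = 0"
    from inv have "\<exists>B. inverts_mat (Tm a b c d e f) B \<and> inverts_mat B (Tm a b c d e f)"
      unfolding invertible_mat_def by blast
    then obtain B where i1: "inverts_mat (Tm a b c d e f) B" and i2: "inverts_mat B (Tm a b c d e f)"
      by blast
    have B1: "Tm a b c d e f * B = 1\<^sub>m 8" using i1 unfolding inverts_mat_def dimT .
    have B2: "B * Tm a b c d e f = 1\<^sub>m (dim_row B)" using i2 unfolding inverts_mat_def .
    have "dim_col (B * Tm a b c d e f) = dim_col (1\<^sub>m (dim_row B) :: 'a mat)" using B2 by (rule arg_cong)
    hence rB: "dim_row B = 8" by (simp only: index_mult_mat(3) index_one_mat(3) dimT)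
    have "dim_col (Tm a b c d e f * B) = dim_col (1\<^sub>m 8 :: 'a mat)" using B1 by (rule arg_cong)
    hence cB: "dim_col B = 8" by (simp only: index_mult_mat(3) index_one_mat(3))
    have carB: "B \<in> carrier_mat 8 8" using rB cB by (rule carrier_matI)
    have TM0: "Tm a b c d e f * Mm a b c d e f = 0\<^sub>m 8 8"
      unfolding TM Q0 by (rule eq_matI) auto
    have "Mm a b c d e f = 1\<^sub>m 8 * Mm a b c d e f"
      using carT(2) by (rule left_mult_one_mat[symmetric])
    also have "\<dots> = (B * Tm a b c d e f) * Mm a b c d e f"
      unfolding B2 rB ..
    also have "\<dots> = B * (Tm a b c d e f * Mm a b c d e f)"
      using carB carT by (rule assoc_mult_mat)
    also have "\<dots> = 0\<^sub>m 8 8" unfolding TM0 using carB by (rule right_mult_zero_mat)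
    finally have "Mm a b c d e f $$ (0,7) = 0\<^sub>m 8 8 $$ (0,7)" by (rule arg_cong)
    hence "- (2 * b * d * e) = 0" unfolding M07 by (subst (asm) index_zero_mat) auto
    thus False using two nz by simp
  qed
next
  assume Q: "Qp a b c d e f \<noteq> 0"
  define B where "B = (- 1 / Qp a b c d e f) \<cdot>\<^sub>m Mm a b c d e f"
  have carB: "B \<in> carrier_mat 8 8" unfolding B_def using carT(2) by (rule smult_carrier_mat)
  have "Tm a b c d e f * B = (- 1 / Qp a b c d e f) \<cdot>\<^sub>m (Tm a b c d e f * Mm a b c d e f)"
    unfolding B_def by (rule mult_smult_distrib[OF carT])
  also have "\<dots> = 1\<^sub>m 8" unfolding TM by (rule eq_matI) (auto simp: Q)
  finally have TB: "Tm a b c d e f * B = 1\<^sub>m 8" .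
  have BT: "B * Tm a b c d e f = 1\<^sub>m 8" by (rule mat_mult_left_right_inverse[OF carT(1) carB TB])
  have rB: "dim_row B = 8" using carB by (rule carrier_matD)
  show "invertible_mat (Tm a b c d e f)"
    unfolding invertible_mat_def inverts_mat_def square_mat.simps
  proof (intro conjI exI)
    show "dim_col (Tm a b c d e f) = dim_row (Tm a b c d e f)" unfolding dimT ..
    show "Tm a b c d e f * B = 1\<^sub>m (dim_row (Tm a b c d e f))" unfolding dimT by (rule TB)
    show "B * Tm a b c d e f = 1\<^sub>m (dim_row B)" unfolding rB by (rule BT)
  qed
qed




definition G :: "'a::comm_ring_1 \<Rightarrow> 'a \<Rightarrow> 'a \<Rightarrow> 'a" where
  "G x y z = (x+y+z)*(x+y-z)*(x-y+z)*(x-y-z)"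

definition Bd :: "bool \<Rightarrow> 'a::comm_ring_1 \<Rightarrow> 'a \<Rightarrow> 'a \<Rightarrow> bool" where
  "Bd P3 K1 K2 K3 = ((K1 = K2 \<and> K2 = K3 \<and> P3) \<or>
        (K1 = K2 \<and> K2 \<noteq> K3 \<and> K3 \<noteq> 2 * K1 \<and> K3 \<noteq> - (2 * K1)) \<or>
        (K1 \<noteq> K2 \<and> K1 \<noteq> K3 \<and> K2 \<noteq> K3 \<and>
         K3 \<noteq> K1 + K2 \<and> K3 \<noteq> - (K1 + K2) \<and> K3 \<noteq> K1 - K2 \<and> K3 \<noteq> - (K1 - K2)))"

lemma t3: "(3::'a::comm_ring_1) * u = u + u + u"
  by (metis add.commute distrib_right mult_1 mult_2 numeral_Bit1 numeral_One)

lemma t2: "(2::'a::comm_ring_1) * x = x + x" by (rule mult_2)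
lemma h1: "y = 2*x \<Longrightarrow> -(x-y) = (x::'a::comm_ring_1)" unfolding t2 by (simp add: algebra_simps)
lemma h2: "y = -(2*x) \<Longrightarrow> -(x+y) = (x::'a::comm_ring_1)" unfolding t2 by (simp add: algebra_simps)
lemma h3: "x = 2*y \<Longrightarrow> x - y = (y::'a::comm_ring_1)" unfolding t2 by (simp add: algebra_simps)
lemma h4: "x = -(2*y) \<Longrightarrow> -(x+y) = (y::'a::comm_ring_1)" unfolding t2 by (simp add: algebra_simps)

lemma G_sym1: "G x y z = G y x z"
proof -
  have e: "y-x+z = -(x-y-z)" "y-x-z = -(x-y+z)" "y+x+z = x+y+z" "y+x-z = x+y-z" by (simp_all add: algebra_simps)
  show ?thesis unfolding G_def e by (simp only: mult_minus_left mult_minus_right minus_minus mult_ac)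
qed

lemma G_sym2: "G x y z = G x z y"
proof -
  have e: "x+z+y = x+y+z" "x+z-y = x-y+z" "x-z+y = x+y-z" "x-z-y = x-y-z" by (simp_all add: algebra_simps)
  show ?thesis unfolding G_def e by (simp add: mult_ac)
qed

lemma G_nz: fixes x y z :: "'a::field"
  shows "G x y z \<noteq> 0 \<longleftrightarrow> (z \<noteq> x + y \<and> z \<noteq> - (x + y) \<and> z \<noteq> x - y \<and> z \<noteq> - (x - y))"
proof -
  have 1: "x+y+z = 0 \<longleftrightarrow> z = - (x + y)" by (metis neg_eq_iff_add_eq_0)
  have 2: "x+y-z = 0 \<longleftrightarrow> z = x + y" by (auto simp: algebra_simps)
  have 3: "x-y+z = 0 \<longleftrightarrow> z = - (x - y)" by (auto simp: algebra_simps)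
  have 4: "x-y-z = 0 \<longleftrightarrow> z = x - y" by (auto simp: algebra_simps)
  show ?thesis unfolding G_def mult_eq_0_iff 1 2 3 4 by blast
qed

lemma Bd_G: fixes u v w :: "'a::field"
  assumes "(2::'a) \<noteq> 0" "P3 \<longleftrightarrow> (3::'a) \<noteq> 0" "u \<noteq> 0" "v \<noteq> 0" "w \<noteq> 0" "Bd P3 u v w"
  shows "G u v w \<noteq> 0"
proof -
  have A: "u \<noteq> u + u" using assms(3) by (metis add_cancel_right_right)
  consider "u = v" "v = w" "P3" | "u = v" "v \<noteq> w" "w \<noteq> 2 * u" "w \<noteq> - (2 * u)"
    | "w \<noteq> u + v" "w \<noteq> - (u + v)" "w \<noteq> u - v" "w \<noteq> - (u - v)"
    using assms(6) unfolding Bd_def by blast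
  hence "w \<noteq> u + v \<and> w \<noteq> - (u + v) \<and> w \<noteq> u - v \<and> w \<noteq> - (u - v)"
  proof cases
    case 1
    have "3 * u \<noteq> 0" using 1(3) assms(2,3) by simp
    have "u \<noteq> - (u + u)"
    proof
      assume "u = - (u + u)"
      hence "3 * u = 0" unfolding t3 by (metis add.assoc eq_neg_iff_add_eq_0)
      thus False using \<open>3 * u \<noteq> 0\<close> by simp
    qed
    thus ?thesis using 1 A assms(3) by simp
  next
    case 2
    have e: "u + v = 2 * u" using 2(1) by (metis mult_2)
    have e2: "u - v = 0" using 2(1) by simp
    show ?thesis using 2(3,4) assms(5) unfolding e e2 by simp
  next
    case 3 thus ?thesis by blast
  qed
  thus ?thesis unfolding G_nz .
qed

lemma G_Bd: fixes x y z :: "'a::field"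
  assumes "(2::'a) \<noteq> 0" "P3 \<longleftrightarrow> (3::'a) \<noteq> 0" "x \<noteq> 0" "y \<noteq> 0" "z \<noteq> 0" "G x y z \<noteq> 0"
  shows "Bd P3 x y z \<or> Bd P3 x z y \<or> Bd P3 y z x"
proof -
  have g: "z \<noteq> x + y" "z \<noteq> - (x + y)" "z \<noteq> x - y" "z \<noteq> - (x - y)"
    using assms(6) unfolding G_nz by blast+
  consider "x = y" "y = z" | "x = y" "y \<noteq> z" | "x = z" "x \<noteq> y" | "y = z" "x \<noteq> y"
    | "x \<noteq> y" "x \<noteq> z" "y \<noteq> z" by blast
  thus ?thesis
  proof cases
    case 1
    have "3 * x \<noteq> 0"
    proof
      assume "3 * x = 0"
      hence "z = - (z + z)" using 1 unfolding t3 by (metis add.assoc eq_neg_iff_add_eq_0)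
      hence "z = - (x + y)" using 1 by simp
      thus False using g(2) by simp
    qed
    hence "P3" using assms(2) by simp
    hence "Bd P3 x y z" using 1 unfolding Bd_def by simp
    thus ?thesis by simp
  next
    case 2
    have e: "x + y = 2 * x" using 2(1) by (metis mult_2)
    have "z \<noteq> 2 * x" using g(1) unfolding e .
    moreover have "z \<noteq> - (2 * x)" using g(2) unfolding e .
    ultimately have "Bd P3 x y z" using 2 unfolding Bd_def by blast
    thus ?thesis by simp
  next
    case 3
    have "y \<noteq> 2 * x"
    proof
      assume "y = 2 * x"
      hence "- (x - y) = x" by (rule h1)
      thus False using g(4) 3(1) by metis
    qed
    moreover have "y \<noteq> - (2 * x)"
    proof
      assume "y = - (2 * x)"
      hence "- (x + y) = x" by (rule h2)
      thus False using g(2) 3(1) by metis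
    qed
    ultimately have "Bd P3 x z y" using 3 unfolding Bd_def by blast
    thus ?thesis by simp
  next
    case 4
    have "x \<noteq> 2 * y"
    proof
      assume "x = 2 * y"
      hence "x - y = y" by (rule h3)
      thus False using g(3) 4(1) by metis
    qed
    moreover have "x \<noteq> - (2 * y)"
    proof
      assume "x = - (2 * y)"
      hence "- (x + y) = y" by (rule h4)
      thus False using g(2) 4(1) by metis
    qed
    ultimately have "Bd P3 y z x" using 4 unfolding Bd_def by blast
    thus ?thesis by simp
  next
    case 5
    hence "Bd P3 x y z" using g unfolding Bd_def by blast
    thus ?thesis by simp
  qed
qed

lemma perm3: "mset [k1,k2,k3] = mset [u,v,w] \<longleftrightarrow>
  (k1,k2,k3) \<in> {(u,v,w),(u,w,v),(v,u,w),(v,w,u),(w,u,v),(w,v,u)}"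
  by (auto simp: add_eq_conv_ex add_mset_commute)





lemma of_nat_to: "of_nat (nat (to_int_mod_ring x)) = (x::'a::prime_card mod_ring)"
proof -
  have "0 \<le> to_int_mod_ring x" using range_to_int_mod_ring[where 'a='a] by (metis atLeastLessThan_iff rangeI)
  hence "of_nat (nat (to_int_mod_ring x)) = (of_int (to_int_mod_ring x) :: 'a mod_ring)"
    by (simp add: of_nat_nat)
  also have "\<dots> = x" unfolding of_int_of_int_mod_ring by simp
  finally show ?thesis .
qed

lemma kval_sq: assumes "qrl t1 t2" shows "(of_nat (kval t1 t2) :: 'p::prime_card mod_ring)^2 = t1*t2"
proof (cases "t1 = t2")
  case True
  thus ?thesis unfolding kval_def by (simp add: of_nat_to power2_eq_square)
next
  case False
  then obtain t where t: "t1 * t2 = t^2" using assms unfolding qrl_def by auto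
  obtain i where i: "i < CARD('p)" "t = of_nat i" using surj_of_nat_mod_ring by blast
  let ?P = "\<lambda>i::nat. i < CARD('p) \<and> (of_nat i :: 'p mod_ring) ^ 2 = t1 * t2"
  have "?P i" using i t by simp
  hence "?P (LEAST i. ?P i)" by (rule LeastI)
  thus ?thesis using False unfolding kval_def by simp
qed

lemma two_nz: assumes "CARD('p::prime_card) \<noteq> 2" shows "(2::'p mod_ring) \<noteq> 0"
proof
  assume "(2::'p mod_ring) = 0"
  hence "(of_nat 2 :: 'p mod_ring) = 0" by simp
  hence "CARD('p) dvd 2" by (rule of_nat_0_mod_ring_dvd)
  moreover have "prime (CARD('p))" by (rule prime_card)
  ultimately have "CARD('p) = 2" using prime_nat_iff by (metis numeral_le_iff semiring_norm(69) dvd_imp_le zero_less_numeral prime_ge_2_nat le_antisym)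
  thus False using assms by simp
qed

lemma three_iff: "CARD('p::prime_card) \<noteq> 3 \<longleftrightarrow> (3::'p mod_ring) \<noteq> 0"
proof
  assume a: "CARD('p) \<noteq> 3"
  show "(3::'p mod_ring) \<noteq> 0"
  proof
    assume "(3::'p mod_ring) = 0"
    hence "(of_nat 3 :: 'p mod_ring) = 0" by simp
    hence "CARD('p) dvd 3" by (rule of_nat_0_mod_ring_dvd)
    moreover have "prime (CARD('p))" by (rule prime_card)
    moreover have "CARD('p) \<ge> 2" using prime_card[where 'a='p] prime_ge_2_nat by blast
    ultimately have le: "CARD('p) \<le> 3" "CARD('p) \<ge> 2" "CARD('p) dvd 3" by (auto intro: dvd_imp_le)
    have "CARD('p) = 3"
    proof (rule ccontr)
      assume "CARD('p) \<noteq> 3"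
      hence "CARD('p) = 2" using le by linarith
      thus False using le(3) by simp
    qed
    thus False using a by simp
  qed
next
  assume "(3::'p mod_ring) \<noteq> 0"
  show "CARD('p) \<noteq> 3"
  proof
    assume c: "CARD('p) = 3"
    have "(of_nat CARD('p) :: 'p mod_ring) = 0" by (rule of_nat_card_eq_0)
    hence "(of_nat 3 :: 'p mod_ring) = 0" unfolding c .
    thus False using \<open>(3::'p mod_ring) \<noteq> 0\<close> by simp
  qed
qed





lemma ex_perm: "(\<exists>k1 k2 k3. mset [k1,k2,k3] = mset [u,v,w] \<and> P k1 k2 k3) \<longleftrightarrow>
  (P u v w \<or> P u w v \<or> P v u w \<or> P v w u \<or> P w u v \<or> P w v u)"
  unfolding perm3 by auto

lemma QG: assumes "c*d = x^2" "a*b = y^2" "e*f = z^2"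
  shows "Qp a b c d e f = G x y z"
  unfolding Qp_def assms G_def power2_eq_square by (simp add: algebra_simps)

theorem corollary3p4:
  fixes a b c d e f :: "'p::prime_card mod_ring"
  assumes p_odd: "CARD('p) \<noteq> 2"
    and nz: "a \<noteq> 0" "b \<noteq> 0" "c \<noteq> 0" "d \<noteq> 0" "e \<noteq> 0" "f \<noteq> 0"
    and qr: "qrl a b" "qrl c d" "qrl e f"
  shows "invertible_mat (T_RN 2 2 2 a b c d e f) \<longleftrightarrow>
    (\<exists>k1 k2 k3. mset [k1, k2, k3] = mset [kval c d, kval a b, kval e f] \<and>
      (let K1 = (of_nat k1 :: 'p mod_ring); K2 = of_nat k2; K3 = of_nat k3 in
        (K1 = K2 \<and> K2 = K3 \<and> CARD('p) \<noteq> 3) \<or>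
        (K1 = K2 \<and> K2 \<noteq> K3 \<and> K3 \<noteq> 2 * K1 \<and> K3 \<noteq> - (2 * K1)) \<or>
        (K1 \<noteq> K2 \<and> K1 \<noteq> K3 \<and> K2 \<noteq> K3 \<and>
         K3 \<noteq> K1 + K2 \<and> K3 \<noteq> - (K1 + K2) \<and> K3 \<noteq> K1 - K2 \<and> K3 \<noteq> - (K1 - K2))))"
proof -
  define x where "x = (of_nat (kval c d) :: 'p mod_ring)"
  define y where "y = (of_nat (kval a b) :: 'p mod_ring)"
  define z where "z = (of_nat (kval e f) :: 'p mod_ring)"
  define P3 where "P3 = (CARD('p) \<noteq> 3)"
  have hx: "c*d = x^2" using kval_sq[OF qr(2)] unfolding x_def by simp
  have hy: "a*b = y^2" using kval_sq[OF qr(1)] unfolding y_def by simp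
  have hz: "e*f = z^2" using kval_sq[OF qr(3)] unfolding z_def by simp
  have x0: "x \<noteq> 0" using hx nz(3,4) by auto
  have y0: "y \<noteq> 0" using hy nz(1,2) by auto
  have z0: "z \<noteq> 0" using hz nz(5,6) by auto
  have two: "(2::'p mod_ring) \<noteq> 0" by (rule two_nz[OF p_odd])
  have P3: "P3 \<longleftrightarrow> (3::'p mod_ring) \<noteq> 0" unfolding P3_def by (rule three_iff)
  have inv: "invertible_mat (T_RN 2 2 2 a b c d e f) \<longleftrightarrow> G x y z \<noteq> 0"
    unfolding T_eq inv_iff[OF two nz(2,4,5)] QG[OF hx hy hz] ..
  have rhs: "(\<exists>k1 k2 k3. mset [k1, k2, k3] = mset [kval c d, kval a b, kval e f] \<and>
      (let K1 = (of_nat k1 :: 'p mod_ring); K2 = of_nat k2; K3 = of_nat k3 in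
        (K1 = K2 \<and> K2 = K3 \<and> CARD('p) \<noteq> 3) \<or>
        (K1 = K2 \<and> K2 \<noteq> K3 \<and> K3 \<noteq> 2 * K1 \<and> K3 \<noteq> - (2 * K1)) \<or>
        (K1 \<noteq> K2 \<and> K1 \<noteq> K3 \<and> K2 \<noteq> K3 \<and>
         K3 \<noteq> K1 + K2 \<and> K3 \<noteq> - (K1 + K2) \<and> K3 \<noteq> K1 - K2 \<and> K3 \<noteq> - (K1 - K2))))
    \<longleftrightarrow> (Bd P3 x y z \<or> Bd P3 x z y \<or> Bd P3 y x z \<or> Bd P3 y z x \<or> Bd P3 z x y \<or> Bd P3 z y x)"
    unfolding ex_perm Bd_def x_def y_def z_def P3_def Let_def by (rule refl)
  have key: "G x y z \<noteq> 0 \<longleftrightarrow>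
     (Bd P3 x y z \<or> Bd P3 x z y \<or> Bd P3 y x z \<or> Bd P3 y z x \<or> Bd P3 z x y \<or> Bd P3 z y x)"
  proof
    assume "G x y z \<noteq> 0"
    thus "Bd P3 x y z \<or> Bd P3 x z y \<or> Bd P3 y x z \<or> Bd P3 y z x \<or> Bd P3 z x y \<or> Bd P3 z y x"
      using G_Bd[OF two P3 x0 y0 z0] by blast
  next
    have s: "G x y z = G x z y" "G x y z = G y x z" "G x y z = G y z x" "G x y z = G z x y" "G x y z = G z y x"
      by (metis G_sym1 G_sym2)+
    assume "Bd P3 x y z \<or> Bd P3 x z y \<or> Bd P3 y x z \<or> Bd P3 y z x \<or> Bd P3 z x y \<or> Bd P3 z y x"
    thus "G x y z \<noteq> 0"
      using Bd_G[OF two P3] x0 y0 z0 s by metis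
  qed
  show ?thesis unfolding inv rhs key ..
qed





end
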